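(* Let $X$ be a distance-regular graph of diameter $d\geq 3$ on $n$ vertices with degree $k$, and suppose $k>\gamma n>2$ for some $\gamma>0$. If $X$ is not bipartite, then $\mathrm{motion}(X)\geq \frac{\gamma}{3}n$.
   Context: A connected graph $X$ of diameter $d$ is distance-regular if there are integers $a_i,b_i,c_i$ ($0\le i\le d$) such that for all vertices $v,w$ with $\mathrm{dist}(v,w)=i$, $w$ has exactly $c_i$ neighbours at distance $i-1$, $a_i$ at distance $i$, $b_i$ at distance $i+1$ from $v$; $X$ is $k$-regular with $k=b_0$. The motion $\mathrm{motion}(X)$ is the minimum, over non-identity automorphisms of $X$, of the number of vertices not fixed by the automorphism. *)

theory Defs
  imports Main "HOL-Library.Extended_Nat"
begin

definition simple_graph :: "'a set \<Rightarrow> ('a \<Rightarrow> 'a \<Rightarrow> bool) \<Rightarrow> bool" where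
  "simple_graph V E \<longleftrightarrow> finite V \<and> (\<forall>u v. E u v \<longrightarrow> u \<in> V \<and> v \<in> V)
     \<and> (\<forall>u v. E u v \<longrightarrow> E v u) \<and> (\<forall>v. \<not> E v v)"

definition is_walk :: "'a set \<Rightarrow> ('a \<Rightarrow> 'a \<Rightarrow> bool) \<Rightarrow> 'a list \<Rightarrow> 'a \<Rightarrow> 'a \<Rightarrow> bool" where
  "is_walk V E xs v w \<longleftrightarrow> xs \<noteq> [] \<and> hd xs = v \<and> last xs = w \<and> set xs \<subseteq> V
     \<and> (\<forall>j. Suc j < length xs \<longrightarrow> E (xs ! j) (xs ! Suc j))"

definition connected_graph :: "'a set \<Rightarrow> ('a \<Rightarrow> 'a \<Rightarrow> bool) \<Rightarrow> bool" where
  "connected_graph V E \<longleftrightarrow> V \<noteq> {} \<and> (\<forall>v\<in>V. \<forall>w\<in>V. \<exists>xs. is_walk V E xs v w)"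

text \<open>Graph distance: the least length of a walk (meaningful in a connected graph).\<close>

definition gdist :: "'a set \<Rightarrow> ('a \<Rightarrow> 'a \<Rightarrow> bool) \<Rightarrow> 'a \<Rightarrow> 'a \<Rightarrow> nat" where
  "gdist V E v w = (LEAST i. \<exists>xs. is_walk V E xs v w \<and> length xs = Suc i)"

definition diameter :: "'a set \<Rightarrow> ('a \<Rightarrow> 'a \<Rightarrow> bool) \<Rightarrow> nat" where
  "diameter V E = Max {gdist V E v w | v w. v \<in> V \<and> w \<in> V}"

definition degree :: "'a set \<Rightarrow> ('a \<Rightarrow> 'a \<Rightarrow> bool) \<Rightarrow> 'a \<Rightarrow> nat" where
  "degree V E v = card {u \<in> V. E v u}"

definition distance_regular :: "'a set \<Rightarrow> ('a \<Rightarrow> 'a \<Rightarrow> bool) \<Rightarrow> bool" where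
  "distance_regular V E \<longleftrightarrow> simple_graph V E \<and> connected_graph V E \<and>
    (\<exists>a b c :: nat \<Rightarrow> nat. \<forall>v\<in>V. \<forall>w\<in>V.
       card {u \<in> V. E w u \<and> gdist V E v u + 1 = gdist V E v w} = c (gdist V E v w) \<and>
       card {u \<in> V. E w u \<and> gdist V E v u = gdist V E v w} = a (gdist V E v w) \<and>
       card {u \<in> V. E w u \<and> gdist V E v u = gdist V E v w + 1} = b (gdist V E v w))"

definition bipartite :: "'a set \<Rightarrow> ('a \<Rightarrow> 'a \<Rightarrow> bool) \<Rightarrow> bool" where
  "bipartite V E \<longleftrightarrow> (\<exists>A. A \<subseteq> V \<and> (\<forall>u\<in>V. \<forall>v\<in>V. E u v \<longrightarrow> (u \<in> A \<longleftrightarrow> v \<notin> A)))"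

definition automorphism :: "'a set \<Rightarrow> ('a \<Rightarrow> 'a \<Rightarrow> bool) \<Rightarrow> ('a \<Rightarrow> 'a) \<Rightarrow> bool" where
  "automorphism V E \<sigma> \<longleftrightarrow> bij_betw \<sigma> V V \<and> (\<forall>u\<in>V. \<forall>v\<in>V. E u v \<longleftrightarrow> E (\<sigma> u) (\<sigma> v))"

text \<open>Motion: minimum number of vertices moved by a non-identity automorphism
  (infinity if the automorphism group is trivial).\<close>

definition motion :: "'a set \<Rightarrow> ('a \<Rightarrow> 'a \<Rightarrow> bool) \<Rightarrow> enat" where
  "motion V E = (INF \<sigma> \<in> {\<sigma>. automorphism V E \<sigma> \<and> (\<exists>v\<in>V. \<sigma> v \<noteq> v)}.
                   enat (card {v \<in> V. \<sigma> v \<noteq> v}))"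

end

theory Submission
  imports Defs
begin


locale gr =
  fixes V :: "'a set" and E :: "'a \<Rightarrow> 'a \<Rightarrow> bool"
  assumes sg: "simple_graph V E" and conn: "connected_graph V E"
begin

lemma Esym: "E u v \<Longrightarrow> E v u" using sg by (simp add: simple_graph_def)
lemma EV1: "E u v \<Longrightarrow> u \<in> V" using sg by (simp add: simple_graph_def)
lemma EV2: "E u v \<Longrightarrow> v \<in> V" using sg by (simp add: simple_graph_def)
lemma Eirr: "\<not> E v v" using sg by (simp add: simple_graph_def)
lemma finV: "finite V" using sg by (simp add: simple_graph_def)

lemma walk_single: "v \<in> V \<Longrightarrow> is_walk V E [v] v v"
  by (simp add: is_walk_def)

lemma walk_two: "E v w \<Longrightarrow> is_walk V E [v,w] v w"
  using EV1 EV2 by (auto simp: is_walk_def less_Suc_eq)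

lemma walk_three: "E u y \<Longrightarrow> E y z \<Longrightarrow> is_walk V E [u,y,z] u z"
  using EV1 EV2 by (auto simp: is_walk_def less_Suc_eq nth_Cons split: nat.splits)

lemma walk_snoc: "is_walk V E xs v w \<Longrightarrow> E w w' \<Longrightarrow> is_walk V E (xs@[w']) v w'"
  unfolding is_walk_def
proof (intro conjI allI impI)
  assume h: "xs \<noteq> [] \<and> hd xs = v \<and> last xs = w \<and> set xs \<subseteq> V \<and> (\<forall>j. Suc j < length xs \<longrightarrow> E (xs ! j) (xs ! Suc j))"
    and e: "E w w'"
  show "xs @ [w'] \<noteq> []" by simp
  show "hd (xs @ [w']) = v" using h by simp
  show "last (xs @ [w']) = w'" by simp
  show "set (xs @ [w']) \<subseteq> V" using h EV2[OF e] by simp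
  fix j assume j: "Suc j < length (xs @ [w'])"
  show "E ((xs @ [w']) ! j) ((xs @ [w']) ! Suc j)"
  proof (cases "Suc j < length xs")
    case True then show ?thesis using h by (simp add: nth_append)
  next
    case False
    then have "Suc j = length xs" using j by simp
    have "last xs = xs ! (length xs - 1)" by (rule last_conv_nth) (use h in blast)
    then have "xs ! j = w" using h \<open>Suc j = length xs\<close> by (metis diff_Suc_1)
    then show ?thesis using h e \<open>Suc j = length xs\<close> by (simp add: nth_append)
  qed
qed

lemma walk_rev: "is_walk V E xs v w \<Longrightarrow> is_walk V E (rev xs) w v"
  unfolding is_walk_def
proof (intro conjI allI impI)
  assume h: "xs \<noteq> [] \<and> hd xs = v \<and> last xs = w \<and> set xs \<subseteq> V \<and> (\<forall>j. Suc j < length xs \<longrightarrow> E (xs ! j) (xs ! Suc j))"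
  show "rev xs \<noteq> []" using h by simp
  show "hd (rev xs) = w" using h by (simp add: hd_rev)
  show "last (rev xs) = v" using h by (simp add: last_rev)
  show "set (rev xs) \<subseteq> V" using h by simp
  fix j assume j: "Suc j < length (rev xs)"
  let ?L = "length xs"
  have 1: "rev xs ! j = xs ! (?L - 1 - j)" using j by (simp add: rev_nth)
  have 2: "rev xs ! Suc j = xs ! (?L - 1 - Suc j)" using j by (simp add: rev_nth)
  have "E (xs ! (?L - 1 - Suc j)) (xs ! Suc (?L - 1 - Suc j))" using h j by auto
  moreover have "Suc (?L - 1 - Suc j) = ?L - 1 - j" using j by simp
  ultimately show "E (rev xs ! j) (rev xs ! Suc j)" using 1 2 Esym by metis
qed

lemma walk_take: "is_walk V E xs v w \<Longrightarrow> i < length xs \<Longrightarrow> is_walk V E (take (Suc i) xs) v (xs ! i)"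
proof -
  assume h: "is_walk V E xs v w" and i: "i < length xs"
  have l: "last (take (Suc i) xs) = xs ! i"
  proof -
    have "take (Suc i) xs \<noteq> []" using i by (cases xs) auto
    then have "last (take (Suc i) xs) = take (Suc i) xs ! (length (take (Suc i) xs) - 1)" by (rule last_conv_nth)
    then show ?thesis using i by simp
  qed
  show ?thesis using h i l unfolding is_walk_def
    by (auto dest: in_set_takeD)
qed

lemma walk_exists: "v \<in> V \<Longrightarrow> w \<in> V \<Longrightarrow> \<exists>xs. is_walk V E xs v w \<and> length xs = Suc (gdist V E v w)"
proof -
  assume "v \<in> V" "w \<in> V"
  then obtain xs where xs: "is_walk V E xs v w" using conn by (auto simp: connected_graph_def)
  then have "length xs = Suc (length xs - 1)" by (auto simp: is_walk_def)
  then have "\<exists>i. \<exists>xs. is_walk V E xs v w \<and> length xs = Suc i" using xs by blast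
  from LeastI_ex[OF this] show ?thesis unfolding gdist_def .
qed

lemma gdist_le: "is_walk V E xs v w \<Longrightarrow> gdist V E v w \<le> length xs - 1"
proof -
  assume xs: "is_walk V E xs v w"
  then have "length xs = Suc (length xs - 1)" by (auto simp: is_walk_def)
  then show ?thesis unfolding gdist_def using xs by (metis (mono_tags, lifting) Least_le)
qed

lemma d_refl: "v \<in> V \<Longrightarrow> gdist V E v v = 0"
  using gdist_le[OF walk_single] by simp

lemma d0: "v \<in> V \<Longrightarrow> w \<in> V \<Longrightarrow> gdist V E v w = 0 \<Longrightarrow> v = w"
proof -
  assume "v \<in> V" "w \<in> V" "gdist V E v w = 0"
  then obtain xs where "is_walk V E xs v w" "length xs = 1" using walk_exists by fastforce
  then show "v = w" by (cases xs) (auto simp: is_walk_def)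
qed

lemma d_edge: "E v w \<Longrightarrow> gdist V E v w = 1"
proof -
  assume e: "E v w"
  have "gdist V E v w \<le> 1" using gdist_le[OF walk_two[OF e]] by simp
  moreover have "gdist V E v w \<noteq> 0" using d0[OF EV1[OF e] EV2[OF e]] e Eirr by auto
  ultimately show ?thesis by simp
qed

lemma d1: "v \<in> V \<Longrightarrow> w \<in> V \<Longrightarrow> gdist V E v w = 1 \<Longrightarrow> E v w"
proof -
  assume "v \<in> V" "w \<in> V" "gdist V E v w = 1"
  then obtain xs where xs: "is_walk V E xs v w" "length xs = 2" using walk_exists by fastforce
  then obtain a b where "xs = [a,b]" by (cases xs; cases "tl xs") auto
  then show ?thesis using xs by (auto simp: is_walk_def)
qed

lemma d_iff1: "v \<in> V \<Longrightarrow> w \<in> V \<Longrightarrow> gdist V E v w = 1 \<longleftrightarrow> E v w"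
  using d1 d_edge by blast

lemma d_step: "v \<in> V \<Longrightarrow> E w w' \<Longrightarrow> gdist V E v w' \<le> gdist V E v w + 1"
proof -
  assume "v \<in> V" "E w w'"
  then obtain xs where xs: "is_walk V E xs v w" "length xs = Suc (gdist V E v w)"
    using walk_exists EV1 by blast
  show ?thesis using gdist_le[OF walk_snoc[OF xs(1) \<open>E w w'\<close>]] xs(2) by simp
qed

lemma d_sym: "v \<in> V \<Longrightarrow> w \<in> V \<Longrightarrow> gdist V E v w = gdist V E w v"
proof -
  have le: "gdist V E v w \<le> gdist V E w v" if vw: "v \<in> V" "w \<in> V" for v w
  proof -
    obtain xs where xs: "is_walk V E xs w v" "length xs = Suc (gdist V E w v)"
      using walk_exists vw by blast
    show ?thesis using gdist_le[OF walk_rev[OF xs(1)]] xs(2) by simp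
  qed
  assume "v \<in> V" "w \<in> V" then show ?thesis using le[of v w] le[of w v] by simp
qed

lemma d_le2: "E u y \<Longrightarrow> E y z \<Longrightarrow> gdist V E u z \<le> 2"
  using gdist_le[OF walk_three] by fastforce

lemma d_desc: "v \<in> V \<Longrightarrow> w \<in> V \<Longrightarrow> gdist V E v w = Suc i \<Longrightarrow> \<exists>w'. E w' w \<and> gdist V E v w' = i"
proof -
  assume v: "v \<in> V" and w: "w \<in> V" and d: "gdist V E v w = Suc i"
  then obtain xs where xs: "is_walk V E xs v w" "length xs = Suc (Suc i)"
    using walk_exists by fastforce
  have e: "E (xs ! i) (xs ! Suc i)" using xs by (auto simp: is_walk_def)
  have l: "xs ! Suc i = w" using xs by (auto simp: is_walk_def last_conv_nth)
  have "gdist V E v (xs ! i) \<le> i" using gdist_le[OF walk_take[OF xs(1), of i]] xs(2) by simp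
  moreover have "gdist V E v w \<le> gdist V E v (xs ! i) + 1" using d_step[OF v e] l by simp
  ultimately show ?thesis using e l d by (intro exI[of _ "xs ! i"]) auto
qed

lemma d_down: "v \<in> V \<Longrightarrow> w \<in> V \<Longrightarrow> j \<le> gdist V E v w \<Longrightarrow> \<exists>w'\<in>V. gdist V E v w' = j"
proof (induction "gdist V E v w" arbitrary: w)
  case 0 then show ?case by auto
next
  case (Suc D)
  show ?case
  proof (cases "j = Suc D")
    case True then show ?thesis using Suc by metis
  next
    case False
    obtain w' where "E w' w" "gdist V E v w' = D" using d_desc Suc by metis
    then show ?thesis using Suc EV1 False by (metis le_Suc_eq)
  qed
qed

end


locale drg = gr V E for V :: "'a set" and E +
  fixes a b c :: "nat \<Rightarrow> nat" and k :: nat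
  assumes dr: "\<forall>v\<in>V. \<forall>w\<in>V.
       card {u \<in> V. E w u \<and> gdist V E v u + 1 = gdist V E v w} = c (gdist V E v w) \<and>
       card {u \<in> V. E w u \<and> gdist V E v u = gdist V E v w} = a (gdist V E v w) \<and>
       card {u \<in> V. E w u \<and> gdist V E v u = gdist V E v w + 1} = b (gdist V E v w)"
    and deg: "\<forall>v\<in>V. card {u \<in> V. E v u} = k"
begin

lemma A1: "E p y \<Longrightarrow> card {x\<in>V. E p x \<and> E y x} = a 1"
proof -
  assume e: "E p y"
  have p: "p \<in> V" and y: "y \<in> V" using EV1 EV2 e by auto
  have "card {u \<in> V. E y u \<and> gdist V E p u = gdist V E p y} = a (gdist V E p y)"
    using dr[rule_format, OF p y] by (rule conjunct1[OF conjunct2])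
  moreover have "gdist V E p y = 1" using d_edge e by simp
  moreover have "{u \<in> V. E y u \<and> gdist V E p u = 1} = {x\<in>V. E p x \<and> E y x}"
    using d_iff1 p by auto
  ultimately show ?thesis by simp
qed

lemma C2: "p \<in> V \<Longrightarrow> x \<in> V \<Longrightarrow> gdist V E p x = 2 \<Longrightarrow> card {w\<in>V. E p w \<and> E x w} = c 2"
proof -
  assume p: "p \<in> V" and x: "x \<in> V" and d: "gdist V E p x = 2"
  have "card {u \<in> V. E x u \<and> gdist V E p u + 1 = gdist V E p x} = c (gdist V E p x)"
    using dr[rule_format, OF p x] by (rule conjunct1)
  moreover have "{u \<in> V. E x u \<and> gdist V E p u + 1 = 2} = {w\<in>V. E p w \<and> E x w}"
    using d_iff1 p by auto
  ultimately show ?thesis using d by simp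
qed

lemma fin: "finite {x\<in>V. P x}" using finV by simp

lemma exist3:
  assumes "diameter V E \<ge> 3"
  shows "\<exists>z p y y'. z \<in> V \<and> p \<in> V \<and> gdist V E z p = 3 \<and> E y p \<and> gdist V E z y = 2 \<and> E z y' \<and> E y' y"
proof -
  let ?D = "{gdist V E v w | v w. v \<in> V \<and> w \<in> V}"
  have "?D = (\<lambda>(v,w). gdist V E v w) ` (V \<times> V)" by auto
  then have fD: "finite ?D" using finV by simp
  have "V \<noteq> {}" using conn by (simp add: connected_graph_def)
  then have "?D \<noteq> {}" by auto
  from Max_in[OF fD this] obtain z q where zq: "z \<in> V" "q \<in> V" "gdist V E z q = diameter V E"
    unfolding diameter_def by auto
  obtain p where p: "p \<in> V" "gdist V E z p = 3" using d_down[OF zq(1) zq(2), of 3] zq assms by auto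
  obtain y where y: "E y p" "gdist V E z y = 2" using d_desc[OF zq(1) p(1)] p by auto
  obtain y' where y': "E y' y" "gdist V E z y' = 1" using d_desc[OF zq(1) EV1[OF y(1)]] y by auto
  have "E z y'" using d1[OF zq(1) EV1[OF y'(1)]] y' by simp
  then show ?thesis using zq p y y' by blast
qed

lemma ineqI:
  assumes "diameter V E \<ge> 3"
  shows "a 1 + c 2 \<le> k"
proof -
  obtain z p y y' where h: "z \<in> V" "p \<in> V" "gdist V E z p = 3" "E y p" "gdist V E z y = 2" "E z y'" "E y' y"
    using exist3[OF assms] by blast
  have yV: "y \<in> V" using EV1 h by blast
  let ?S1 = "{x\<in>V. E p x \<and> E y x}" and ?S2 = "{x\<in>V. E z x \<and> E y x}"
  have c1: "card ?S1 = a 1" using A1[OF Esym[OF h(4)]] .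
  have c2: "card ?S2 = c 2" using C2[OF h(1) yV h(5)] .
  have disj: "?S1 \<inter> ?S2 = {}"
  proof (rule ccontr)
    assume "?S1 \<inter> ?S2 \<noteq> {}"
    then obtain x where "E p x" "E z x" by blast
    then have "gdist V E z p \<le> 2" using d_le2[of z x p] Esym[of p x] by blast
    then show False using h by simp
  qed
  have "card (?S1 \<union> ?S2) = a 1 + c 2" using card_Un_disjoint[OF fin fin disj] c1 c2 by simp
  moreover have "card (?S1 \<union> ?S2) \<le> card {x\<in>V. E y x}" by (rule card_mono[OF fin]) auto
  ultimately show ?thesis using deg yV by simp
qed

lemma ineqII:
  assumes "diameter V E \<ge> 3"
  shows "2 * a 1 \<le> k + c 2"
proof -
  obtain z p y y' where h: "z \<in> V" "p \<in> V" "gdist V E z p = 3" "E y p" "gdist V E z y = 2" "E z y'" "E y' y"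
    using exist3[OF assms] by blast
  have yV: "y \<in> V" and y'V: "y' \<in> V" using EV1 EV2 h by blast+
  let ?S1 = "{x\<in>V. E z x \<and> E y' x}" and ?S2 = "{x\<in>V. E y x \<and> E y' x}"
  have c1: "card ?S1 = a 1" using A1[OF h(6)] .
  have c2: "card ?S2 = a 1" using A1[OF Esym[OF h(7)]] .
  have "card (?S1 \<inter> ?S2) \<le> card {w\<in>V. E z w \<and> E y w}" by (rule card_mono[OF fin]) auto
  then have i: "card (?S1 \<inter> ?S2) \<le> c 2" using C2[OF h(1) yV h(5)] by simp
  have "card (?S1 \<union> ?S2) \<le> card {x\<in>V. E y' x}" by (rule card_mono[OF fin]) auto
  then have u: "card (?S1 \<union> ?S2) \<le> k" using deg y'V by simp
  have "card ?S1 + card ?S2 = card (?S1 \<union> ?S2) + card (?S1 \<inter> ?S2)"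
    by (rule card_Un_Int[OF fin fin])
  then show ?thesis using c1 c2 i u by simp
qed

lemma triangle:
  assumes e: "E p y" and a0: "a 1 > 0" and ak: "2 * a 1 + 1 < k"
  shows "2 * c 2 \<le> a 1 + k"
proof -
  have pV: "p \<in> V" and yV: "y \<in> V" using EV1 EV2 e by auto
  have "{x\<in>V. E p x \<and> E y x} \<noteq> {}" using A1[OF e] a0 by (metis card.empty less_irrefl)
  then obtain y' where y': "y' \<in> V" "E p y'" "E y y'" by blast
  let ?S = "{x\<in>V. E p x \<and> E y x}" and ?S' = "{x\<in>V. E y x \<and> E y' x}"
  have "\<not> {x\<in>V. E y x} \<subseteq> {p} \<union> ?S \<union> ?S'"
  proof
    assume "{x\<in>V. E y x} \<subseteq> {p} \<union> ?S \<union> ?S'"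
    then have "card {x\<in>V. E y x} \<le> card ({p} \<union> ?S \<union> ?S')" by (rule card_mono[rotated]) (simp add: fin)
    also have "\<dots> \<le> card ({p} \<union> ?S) + card ?S'" by (rule card_Un_le)
    also have "\<dots> \<le> card {p} + card ?S + card ?S'" using card_Un_le[of "{p}" ?S] by simp
    finally have "k \<le> 1 + a 1 + a 1" using A1[OF e] A1[of y y'] y' deg yV by simp
    then show False using ak by simp
  qed
  then obtain x where x: "x \<in> V" "E y x" "x \<noteq> p" "\<not> E p x" "\<not> E y' x" by blast
  have xy': "x \<noteq> y'" using x y' by blast
  have dpx: "gdist V E p x = 2"
  proof -
    have "gdist V E p x \<le> 2" using d_le2 e x by blast
    moreover have "gdist V E p x \<noteq> 0" using d0 pV x by blast
    moreover have "gdist V E p x \<noteq> 1" using d1 pV x by blast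
    ultimately show ?thesis by simp
  qed
  have dy'x: "gdist V E y' x = 2"
  proof -
    have "gdist V E y' x \<le> 2" using d_le2[OF Esym[OF y'(3)] x(2)] .
    moreover have "gdist V E y' x \<noteq> 0" using d0 y' x xy' by blast
    moreover have "gdist V E y' x \<noteq> 1" using d1 y' x by blast
    ultimately show ?thesis by simp
  qed
  let ?T = "{w\<in>V. E y' w \<and> E x w}"
  have cT: "card ?T = c 2" using C2 y' x dy'x by blast
  have cP: "card {w\<in>V. E p w \<and> E x w} = c 2" using C2 pV x dpx by blast
  have sub: "?T \<subseteq> {w\<in>V. E p w \<and> E y' w} \<union> ({w\<in>V. E x w} - {w\<in>V. E p w \<and> E x w})" by auto
  have "card ?T \<le> card ({w\<in>V. E p w \<and> E y' w} \<union> ({w\<in>V. E x w} - {w\<in>V. E p w \<and> E x w}))"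
    by (rule card_mono[OF _ sub]) (simp add: fin)
  also have "\<dots> \<le> card {w\<in>V. E p w \<and> E y' w} + card ({w\<in>V. E x w} - {w\<in>V. E p w \<and> E x w})"
    by (rule card_Un_le)
  also have "card ({w\<in>V. E x w} - {w\<in>V. E p w \<and> E x w}) = card {w\<in>V. E x w} - card {w\<in>V. E p w \<and> E x w}"
    by (rule card_Diff_subset) (auto simp: fin)
  finally have "c 2 \<le> a 1 + (k - c 2)" using cT cP A1[OF y'(2)] deg x(1) by simp
  moreover have "card {w\<in>V. E p w \<and> E x w} \<le> card {w\<in>V. E x w}" by (rule card_mono[OF fin]) auto
  ultimately show ?thesis using cP deg x(1) by simp
qed

lemma bip:
  assumes a0: "a 1 = 0" and ck: "k < 2 * c 2"
  shows "bipartite V E"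
proof -
  have notri: "\<not> E p z" if "E p y" "E y z" for p y z
  proof
    assume "E p z"
    then have "z \<in> {x\<in>V. E p x \<and> E y x}" using that(2) EV2[OF \<open>E p z\<close>] by blast
    moreover have "{x\<in>V. E p x \<and> E y x} = {}" using A1[OF that(1)] a0 fin by simp
    ultimately show False by blast
  qed
  define R where "R x y \<longleftrightarrow> x = y \<or> gdist V E x y = 2" for x y
  have Rsym: "R x y \<Longrightarrow> x \<in> V \<Longrightarrow> y \<in> V \<Longrightarrow> R y x" for x y using d_sym[of x y] unfolding R_def by auto
  have trans2: "x = z \<or> gdist V E x z = 2"
    if h: "x \<in> V" "y \<in> V" "z \<in> V" "gdist V E x y = 2" "gdist V E y z = 2" for x y z
  proof -
    let ?S1 = "{w\<in>V. E y w \<and> E x w}" and ?S2 = "{w\<in>V. E y w \<and> E z w}"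
    have "gdist V E y x = 2" using h d_sym[of y x] by simp
    then have "card ?S1 = c 2" using C2[OF h(2) h(1)] by simp
    moreover have "card ?S2 = c 2" using C2[OF h(2) h(3) h(5)] .
    moreover have "card (?S1 \<union> ?S2) \<le> card {w\<in>V. E y w}" by (rule card_mono[OF fin]) auto
    moreover have "card ?S1 + card ?S2 = card (?S1 \<union> ?S2) + card (?S1 \<inter> ?S2)"
      by (rule card_Un_Int[OF fin fin])
    ultimately have "card (?S1 \<inter> ?S2) > 0" using deg h ck by simp
    then have "?S1 \<inter> ?S2 \<noteq> {}" by (metis card.empty less_irrefl)
    then obtain w where w0: "E x w" "E z w" by blast
    then have w: "E x w" "E w z" using Esym[OF w0(2)] by auto
    show ?thesis
    proof (cases "x = z")
      case False
      have "gdist V E x z \<le> 2" using d_le2 w by blast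
      moreover have "gdist V E x z \<noteq> 0" using d0 h False by blast
      moreover have "gdist V E x z \<noteq> 1" using d1 h notri w by blast
      ultimately show ?thesis by simp
    qed simp
  qed
  have Rtrans: "R x z" if t: "x \<in> V" "y \<in> V" "z \<in> V" "R x y" "R y z" for x y z
  proof (cases "x = y")
    case True then show ?thesis using t by simp
  next
    case False
    then have xy: "gdist V E x y = 2" using t unfolding R_def by simp
    show ?thesis
    proof (cases "y = z")
      case True then show ?thesis using t by simp
    next
      case False
      then have "gdist V E y z = 2" using t unfolding R_def by simp
      then show ?thesis using trans2[OF t(1,2,3) xy] unfolding R_def by simp
    qed
  qed
  obtain u0 where u0: "u0 \<in> V" using conn by (auto simp: connected_graph_def)
  define A where "A = {w\<in>V. R u0 w}"
  have step: "w' \<in> A" if "aa \<in> A" "E aa w" "E w w'" for aa w w'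
  proof -
    have w'V: "w' \<in> V" and aV: "aa \<in> V" using that EV1 EV2 by blast+
    have "R aa w'"
    proof (cases "aa = w'")
      case False
      have "gdist V E aa w' \<le> 2" using d_le2 that by blast
      moreover have "gdist V E aa w' \<noteq> 0" using d0 aV w'V False by blast
      moreover have "gdist V E aa w' \<noteq> 1" using d1 aV w'V notri that by blast
      ultimately show ?thesis unfolding R_def by simp
    qed (simp add: R_def)
    then show ?thesis using Rtrans[of u0 aa w'] that u0 aV w'V unfolding A_def by blast
  qed
  have P: "\<forall>w\<in>V. gdist V E u0 w = n \<longrightarrow> (w \<in> A \<or> (\<exists>aa\<in>A. E aa w))" for n
  proof (induction n)
    case 0
    then show ?case using d0 u0 unfolding A_def R_def by auto
  next
    case (Suc n)
    show ?case
    proof (intro ballI impI)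
      fix w assume w: "w \<in> V" "gdist V E u0 w = Suc n"
      then obtain w' where w': "E w' w" "gdist V E u0 w' = n" using d_desc u0 by blast
      then have "w' \<in> A \<or> (\<exists>aa\<in>A. E aa w')" using Suc EV1 by blast
      then show "w \<in> A \<or> (\<exists>aa\<in>A. E aa w)" using step w' by blast
    qed
  qed
  show ?thesis unfolding bipartite_def
  proof (intro exI[of _ A] conjI ballI impI)
    show "A \<subseteq> V" unfolding A_def by auto
    fix x y assume xy: "x \<in> V" "y \<in> V" "E x y"
    have d1xy: "gdist V E x y = 1" using d_edge xy by simp
    show "x \<in> A \<longleftrightarrow> y \<notin> A"
    proof
      assume "x \<in> A" show "y \<notin> A"
      proof
        assume "y \<in> A"
        then have "R u0 y" using A_def by blast
        moreover have "R x u0" using Rsym[of u0 x] \<open>x \<in> A\<close> u0 xy unfolding A_def by blast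
        ultimately have "R x y" using Rtrans[of x u0 y] u0 xy by blast
        then show False using d1xy Eirr xy unfolding R_def by auto
      qed
    next
      assume "y \<notin> A"
      show "x \<in> A"
      proof (rule ccontr)
        assume "x \<notin> A"
        then obtain aa where "aa \<in> A" "E aa x" using P xy by blast
        then have "y \<in> A" using step xy by blast
        then show False using \<open>y \<notin> A\<close> by blast
      qed
    qed
  qed
qed

end


context drg begin

lemma core:
  assumes aut: "automorphism V E \<sigma>" and u: "u \<in> V" "\<sigma> u \<noteq> u"
    and dia: "diameter V E \<ge> 3" and nb: "\<not> bipartite V E"
  shows "k \<le> 3 * card {v\<in>V. \<sigma> v \<noteq> v}"
proof (rule ccontr)
  assume H: "\<not> k \<le> 3 * card {v\<in>V. \<sigma> v \<noteq> v}"
  let ?M = "{v\<in>V. \<sigma> v \<noteq> v}"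
  define v where "v = \<sigma> u"
  have bij: "bij_betw \<sigma> V V" and pres: "\<forall>x\<in>V. \<forall>y\<in>V. E x y \<longleftrightarrow> E (\<sigma> x) (\<sigma> y)"
    using aut by (auto simp: automorphism_def)
  have vV: "v \<in> V" using bij u bij_betw_apply v_def by metis
  let ?Nu = "{w\<in>V. E u w}" and ?Nv = "{w\<in>V. E v w}"
  have s1: "?Nu - ?Nv \<subseteq> ?M" using pres u v_def by auto
  have s2: "?Nv - ?Nu \<subseteq> ?M" using pres u v_def by auto
  have "card ((?Nu - ?Nv) \<union> (?Nv - ?Nu)) \<le> card ?M"
    by (rule card_mono) (use s1 s2 fin in auto)
  moreover have "card ((?Nu - ?Nv) \<union> (?Nv - ?Nu)) = card (?Nu - ?Nv) + card (?Nv - ?Nu)"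
    by (rule card_Un_disjoint) (auto simp: fin)
  moreover have "card (?Nu - ?Nv) = card ?Nu - card (?Nu \<inter> ?Nv)"
    by (rule card_Diff_subset_Int) (simp add: fin)
  moreover have "card (?Nv - ?Nu) = card ?Nv - card (?Nv \<inter> ?Nu)"
    by (rule card_Diff_subset_Int) (simp add: fin)
  moreover have "?Nv \<inter> ?Nu = ?Nu \<inter> ?Nv" by blast
  moreover have "card (?Nu \<inter> ?Nv) \<le> card ?Nu" by (rule card_mono) (auto simp: fin)
  ultimately have "2 * (k - card (?Nu \<inter> ?Nv)) \<le> card ?M" "card (?Nu \<inter> ?Nv) \<le> k"
    using deg u vV by auto
  then have big: "5 * k < 6 * card (?Nu \<inter> ?Nv)" using H by linarith
  then have "?Nu \<inter> ?Nv \<noteq> {}" by (metis card.empty mult_0_right not_less_zero)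
  then obtain y where y: "E u y" "E v y" by blast
  have uv: "u \<noteq> v" using u v_def by simp
  have I: "a 1 + c 2 \<le> k" using ineqI dia by blast
  show False
  proof (cases "E u v")
    case True
    have "?Nu \<inter> ?Nv = {x\<in>V. E u x \<and> E v x}" by blast
    then have "card (?Nu \<inter> ?Nv) = a 1" using A1[OF True] by simp
    moreover have "2 * a 1 \<le> k + c 2" using ineqII dia by blast
    ultimately show False using big I by linarith
  next
    case False
    have d2: "gdist V E u v = 2"
    proof -
      have "gdist V E u v \<le> 2" using d_le2 y Esym by blast
      moreover have "gdist V E u v \<noteq> 0" using d0 u vV uv by blast
      moreover have "gdist V E u v \<noteq> 1" using d1 u vV False by blast
      ultimately show ?thesis by simp
    qed
    have "?Nu \<inter> ?Nv = {x\<in>V. E u x \<and> E v x}" by blast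
    then have cc: "card (?Nu \<inter> ?Nv) = c 2" using C2 u vV d2 by simp
    show False
    proof (cases "a 1 = 0")
      case True
      have "k < 2 * c 2" using big cc by linarith
      then show False using bip True nb by blast
    next
      case False
      have "2 * a 1 + 1 < k" using big cc I False by linarith
      then have "2 * c 2 \<le> a 1 + k" using triangle[OF y(1)] False by blast
      then show False using big cc I by linarith
    qed
  qed
qed

end

theorem proposition4p6:
  fixes V :: "'a set" and E :: "'a \<Rightarrow> 'a \<Rightarrow> bool" and n k :: nat and \<gamma> :: real
  assumes "distance_regular V E"
    and "diameter V E \<ge> 3"
    and "n = card V"
    and "\<forall>v\<in>V. degree V E v = k"
    and "\<gamma> > 0"
    and "real k > \<gamma> * real n" and "\<gamma> * real n > 2"
    and "\<not> bipartite V E"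
  shows "\<forall>m. motion V E = enat m \<longrightarrow> real m \<ge> \<gamma> / 3 * real n"
proof (intro allI impI)
  fix m assume mo: "motion V E = enat m"
  obtain a b c where dr: "\<forall>v\<in>V. \<forall>w\<in>V.
       card {u \<in> V. E w u \<and> gdist V E v u + 1 = gdist V E v w} = c (gdist V E v w) \<and>
       card {u \<in> V. E w u \<and> gdist V E v u = gdist V E v w} = a (gdist V E v w) \<and>
       card {u \<in> V. E w u \<and> gdist V E v u = gdist V E v w + 1} = b (gdist V E v w)"
    using assms(1) unfolding distance_regular_def by blast
  interpret drg V E a b c k
    using assms(1,4) dr by unfold_locales (auto simp: distance_regular_def degree_def)
  have "enat ((k + 2) div 3) \<le> motion V E"
    unfolding motion_def
  proof (rule INF_greatest)
    fix \<sigma> assume "\<sigma> \<in> {\<sigma>. automorphism V E \<sigma> \<and> (\<exists>v\<in>V. \<sigma> v \<noteq> v)}"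
    then obtain u where "automorphism V E \<sigma>" "u \<in> V" "\<sigma> u \<noteq> u" by blast
    then have "k \<le> 3 * card {v\<in>V. \<sigma> v \<noteq> v}" using core assms(2,8) by blast
    then show "enat ((k + 2) div 3) \<le> enat (card {v\<in>V. \<sigma> v \<noteq> v})" by simp
  qed
  then have "(k + 2) div 3 \<le> m" using mo by simp
  then have "k \<le> 3 * m" by linarith
  then have "real k \<le> 3 * real m" by linarith
  then show "real m \<ge> \<gamma> / 3 * real n" using assms(6) by simp
qed

end
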